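(* Let $n\ge 2$ and $q\ge 2$ be integers, let $E_q=\{0,1,\dots,q-1\}$, and let $A\subseteq E_q^n$ be a subset with $m=|A|\ge 2$. Let $R(A)$ denote the number of coordinates $i\in\{1,\dots,n\}$ such that the $i$-th coordinates of the elements of $A$ are not all equal, and let $D_A=\sum_{\{x,y\}\subseteq A,\ x\neq y} d_H(x,y)$, the sum of the Hamming distances over all unordered pairs of distinct elements of $A$. Then: (1) if $m/q\ge 1$, then \[\frac{2qD_A}{(q-1)m^2}\le R(A)\le \frac{D_A}{m-1};\] (2) if $m/q<1$ and $q>2$, then \[\frac{2(q-2)D_A}{(m^2-2)(q-2)-(m-2)^2}\le R(A)\le \frac{D_A}{m-1}.\]
   Context: $E_q^n$ is the set of all $n$-tuples $(x_1,\dots,x_n)$ with $x_i\in E_q$, equipped with the Hamming distance $d_H(x,y)=|\{i : x_i\neq y_i\}|$. Equivalently, $R(A)$ is the number of non-constant columns of the matrix whose rows are the elements of $A$ (the dimension of the smallest face of $E_q^n$ containing $A$, where a $k$-dimensional face is a set of vectors with $k$ coordinates varying freely and the other $n-k$ fixed). *)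

theory Defs
  imports Complex_Main
begin

definition words :: "nat \<Rightarrow> nat \<Rightarrow> nat list set" where
  "words q n = {xs. length xs = n \<and> set xs \<subseteq> {..<q}}"

definition hamming :: "nat list \<Rightarrow> nat list \<Rightarrow> nat" where
  "hamming x y = card {i. i < length x \<and> x ! i \<noteq> y ! i}"

definition rankA :: "nat \<Rightarrow> nat list set \<Rightarrow> nat" where
  "rankA n A = card {i. i < n \<and> (\<exists>x\<in>A. \<exists>y\<in>A. x ! i \<noteq> y ! i)}"

definition DA :: "nat list set \<Rightarrow> nat" where
  "DA A = (\<Sum>P\<in>{P. P \<subseteq> A \<and> card P = 2}. (THE d. \<exists>x y. P = {x, y} \<and> x \<noteq> y \<and> d = hamming x y))"

end

theory Submission
  imports Defs
begin


lemma cs_count: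
  fixes c :: "'a \<Rightarrow> real"
  assumes "finite V" "V \<noteq> {}"
  shows "(sum c V)^2 \<le> real (card V) * (\<Sum>v\<in>V. (c v)^2)"
proof -
  define k where "k = real (card V)"
  have kp: "k > 0" using assms by (simp add: k_def card_gt_0_iff)
  define s where "s = sum c V"
  have "0 \<le> (\<Sum>v\<in>V. (c v - s / k)^2)" by (intro sum_nonneg) auto
  also have "\<dots> = (\<Sum>v\<in>V. (c v)^2) - 2 * (s/k) * s + k * (s/k)^2"
  proof -
    have "(\<Sum>v\<in>V. (c v - s / k)^2) = (\<Sum>v\<in>V. (c v)^2 - 2 * (s/k) * c v + (s/k)^2)"
      by (intro sum.cong) (auto simp: power2_diff algebra_simps)
    also have "\<dots> = (\<Sum>v\<in>V. (c v)^2) - 2 * (s/k) * s + k * (s/k)^2"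
      by (simp add: sum.distrib sum_subtractf sum_distrib_left[symmetric] sum_divide_distrib[symmetric] k_def s_def)
    finally show ?thesis .
  qed
  also have "\<dots> = (\<Sum>v\<in>V. (c v)^2) - s^2 / k"
    using kp by (simp add: field_simps power2_eq_square)
  finally have "s^2 / k \<le> (\<Sum>v\<in>V. (c v)^2)" by simp
  thus ?thesis using kp by (simp add: s_def k_def field_simps)
qed

lemma hamming_sum:
  assumes "length x = n"
  shows "hamming x y = (\<Sum>i<n. if x ! i \<noteq> y ! i then 1 else 0)"
proof -
  have "{i. i < length x \<and> x ! i \<noteq> y ! i} = {..<n} \<inter> {i. x ! i \<noteq> y ! i}" using assms by auto
  thus ?thesis unfolding hamming_def by (simp add: sum.If_cases)
qed

lemma hamming_sym:
  assumes "length x = length y"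
  shows "hamming x y = hamming y x"
  unfolding hamming_def using assms by metis

lemma DA_double:
  assumes "finite A" and len: "\<And>x. x \<in> A \<Longrightarrow> length x = n"
  shows "2 * DA A = (\<Sum>x\<in>A. \<Sum>y\<in>A. hamming x y)"
proof -
  define Pairs where "Pairs = {P. P \<subseteq> A \<and> card P = 2}"
  define Off where "Off = {p \<in> A \<times> A. fst p \<noteq> snd p}"
  define f where "f = (\<lambda>p::nat list \<times> nat list. {fst p, snd p})"
  have hxx: "hamming x x = 0" for x unfolding hamming_def by simp
  have fin: "finite Off" using assms(1) unfolding Off_def by simp
  have img: "f ` Off = Pairs"
  proof
    show "f ` Off \<subseteq> Pairs" unfolding f_def Off_def Pairs_def by (auto simp: card_2_iff)
    show "Pairs \<subseteq> f ` Off"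
    proof
      fix P assume "P \<in> Pairs"
      then obtain a b where "P = {a,b}" "a \<noteq> b" "P \<subseteq> A" unfolding Pairs_def by (auto simp: card_2_iff)
      thus "P \<in> f ` Off" unfolding f_def Off_def by (intro image_eqI[of _ _ "(a,b)"]) auto
    qed
  qed
  have THEv: "(THE d. \<exists>x y. {a,b} = {x, y} \<and> x \<noteq> y \<and> d = hamming x y) = hamming a b"
    if "a \<in> A" "b \<in> A" "a \<noteq> b" for a b
  proof (rule the_equality)
    show "\<exists>x y. {a,b} = {x, y} \<and> x \<noteq> y \<and> hamming a b = hamming x y" using that by blast
    fix d assume "\<exists>x y. {a,b} = {x, y} \<and> x \<noteq> y \<and> d = hamming x y"
    then obtain x y where "{a,b} = {x,y}" "x \<noteq> y" "d = hamming x y" by blast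
    thus "d = hamming a b" using hamming_sym[of a b] len that by (auto simp: doubleton_eq_iff)
  qed
  have "(\<Sum>x\<in>A. \<Sum>y\<in>A. hamming x y) = (\<Sum>p\<in>A\<times>A. hamming (fst p) (snd p))"
    by (simp add: sum.cartesian_product case_prod_beta)
  also have "\<dots> = (\<Sum>p\<in>Off. hamming (fst p) (snd p))"
    using assms(1) by (intro sum.mono_neutral_right) (auto simp: Off_def hxx)
  also have "\<dots> = (\<Sum>P\<in>f ` Off. \<Sum>p\<in>{p\<in>Off. f p = P}. hamming (fst p) (snd p))"
    using fin by (rule sum.image_gen)
  also have "\<dots> = (\<Sum>P\<in>Pairs. 2 * (THE d. \<exists>x y. P = {x, y} \<and> x \<noteq> y \<and> d = hamming x y))"
  proof (unfold img, rule sum.cong[OF refl])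
    fix P assume "P \<in> Pairs"
    then obtain a b where P: "P = {a,b}" "a \<noteq> b" "a \<in> A" "b \<in> A" unfolding Pairs_def by (auto simp: card_2_iff)
    have "{p\<in>Off. f p = P} = {(a,b),(b,a)}" using P unfolding Off_def f_def by (auto simp: doubleton_eq_iff)
    hence "(\<Sum>p\<in>{p\<in>Off. f p = P}. hamming (fst p) (snd p)) = hamming a b + hamming b a" using P by simp
    also have "\<dots> = 2 * hamming a b" using hamming_sym[of a b] len P by simp
    finally show "(\<Sum>p\<in>{p\<in>Off. f p = P}. hamming (fst p) (snd p)) = 2 * (THE d. \<exists>x y. P = {x, y} \<and> x \<noteq> y \<and> d = hamming x y)"
      using THEv[of a b] P by simp
  qed
  also have "\<dots> = 2 * DA A" unfolding DA_def Pairs_def by (simp add: sum_distrib_left)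
  finally show ?thesis by simp
qed



lemma coord_bounds:
  fixes A :: "nat list set" and i q :: nat
  assumes fin: "finite A" and vals: "\<And>x. x \<in> A \<Longrightarrow> x ! i < q"
  defines "S \<equiv> (\<Sum>x\<in>A. \<Sum>y\<in>A. (if x ! i \<noteq> y ! i then 1 else 0 :: nat))"
  shows "S \<le> card A * (card A - 1)"
    and "real S \<le> real (card A)^2 * (real q - 1) / real q"
    and "(\<exists>x\<in>A. \<exists>y\<in>A. x ! i \<noteq> y ! i) \<Longrightarrow> 2 * (card A - 1) \<le> S"
    and "\<not>(\<exists>x\<in>A. \<exists>y\<in>A. x ! i \<noteq> y ! i) \<Longrightarrow> S = 0"
proof -
  define m where "m = card A"
  define c where "c v = card {y\<in>A. y ! i = v}" for v
  define V where "V = (\<lambda>x. x ! i) ` A"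
  have inner: "(\<Sum>y\<in>A. (if x ! i \<noteq> y ! i then 1 else 0 :: nat)) = card {y\<in>A. y ! i \<noteq> x ! i}" for x
    using fin by (simp add: sum.If_cases Int_def conj_commute eq_commute)
  have inner2: "card {y\<in>A. y ! i \<noteq> x ! i} = m - c (x ! i)" for x
  proof -
    have "{y\<in>A. y ! i \<noteq> x ! i} = A - {y\<in>A. y ! i = x ! i}" by auto
    thus ?thesis unfolding m_def c_def using fin by (simp add: card_Diff_subset)
  qed
  have Seq: "S = (\<Sum>x\<in>A. m - c (x ! i))" unfolding S_def using inner inner2 by simp
  have cle: "c v \<le> m" for v unfolding c_def m_def using fin by (intro card_mono) auto
  have Sgrp: "real S = (\<Sum>v\<in>V. real (c v) * (real m - real (c v)))"
  proof -
    have "real S = (\<Sum>x\<in>A. real m - real (c (x ! i)))" using Seq cle by (simp add: of_nat_diff)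
    also have "\<dots> = (\<Sum>v\<in>V. \<Sum>x\<in>{x\<in>A. x ! i = v}. real m - real (c (x ! i)))"
      unfolding V_def using fin by (rule sum.image_gen)
    also have "\<dots> = (\<Sum>v\<in>V. real (c v) * (real m - real (c v)))"
      by (intro sum.cong refl) (simp add: c_def)
    finally show ?thesis .
  qed
  have finV: "finite V" unfolding V_def using fin by simp
  have sumc: "(\<Sum>v\<in>V. real (c v)) = real m"
  proof -
    have "real m = (\<Sum>x\<in>A. 1)" by (simp add: m_def)
    also have "\<dots> = (\<Sum>v\<in>V. \<Sum>x\<in>{x\<in>A. x ! i = v}. 1)"
      unfolding V_def using fin by (rule sum.image_gen)
    also have "\<dots> = (\<Sum>v\<in>V. real (c v))" by (simp add: c_def)
    finally show ?thesis by simp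
  qed
  show "S \<le> card A * (card A - 1)"
  proof -
    have "S \<le> (\<Sum>x\<in>A. card A - 1)" unfolding S_def
    proof (intro sum_mono)
      fix x assume x: "x \<in> A"
      have "{y\<in>A. y ! i \<noteq> x ! i} \<subseteq> A - {x}" by auto
      hence "card {y\<in>A. y ! i \<noteq> x ! i} \<le> card (A - {x})" using fin by (intro card_mono) auto
      thus "(\<Sum>y\<in>A. (if x ! i \<noteq> y ! i then 1 else 0 :: nat)) \<le> card A - 1" using inner x fin by simp
    qed
    thus ?thesis by simp
  qed
  show "real S \<le> real (card A)^2 * (real q - 1) / real q"
  proof (cases "A = {}")
    case True thus ?thesis by (simp add: S_def)
  next
    case False
    then obtain a where "a \<in> A" by auto
    hence q0: "q > 0" using vals by fastforce
    have Vne: "V \<noteq> {}" using False V_def by simp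
    have Vsub: "V \<subseteq> {..<q}" unfolding V_def using vals by auto
    have cV: "real (card V) \<le> real q" using card_mono[OF _ Vsub] by simp
    have cV0: "real (card V) > 0" using finV Vne by (simp add: card_gt_0_iff)
    have cs: "(real m)^2 \<le> real (card V) * (\<Sum>v\<in>V. (real (c v))^2)"
      using cs_count[OF finV Vne, of "\<lambda>v. real (c v)"] sumc by simp
    have sq: "(real m)^2 / real q \<le> (\<Sum>v\<in>V. (real (c v))^2)"
    proof -
      have "(real m)^2 / real q \<le> (real m)^2 / real (card V)"
        using cV cV0 by (intro divide_left_mono) auto
      also have "\<dots> \<le> (\<Sum>v\<in>V. (real (c v))^2)" using cs cV0 by (simp add: divide_le_eq mult.commute)
      finally show ?thesis .
    qed
    have "real S = real m * (\<Sum>v\<in>V. real (c v)) - (\<Sum>v\<in>V. (real (c v))^2)"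
      unfolding Sgrp by (simp add: algebra_simps power2_eq_square sum_subtractf sum_distrib_left)
    also have "\<dots> = (real m)^2 - (\<Sum>v\<in>V. (real (c v))^2)" using sumc by (simp add: power2_eq_square)
    also have "\<dots> \<le> (real m)^2 - (real m)^2 / real q" using sq by simp
    also have "\<dots> = real (card A)^2 * (real q - 1) / real q" using q0 by (simp add: m_def field_simps)
    finally show ?thesis .
  qed
  show "2 * (card A - 1) \<le> S" if ex: "\<exists>x\<in>A. \<exists>y\<in>A. x ! i \<noteq> y ! i"
  proof -
    from ex obtain x y where xy: "x \<in> A" "y \<in> A" "x ! i \<noteq> y ! i" by blast
    let ?u = "x ! i" and ?w = "y ! i"
    have uV: "?u \<in> V" "?w \<in> V" using xy V_def by auto
    have c1: "c ?u \<ge> 1" "c ?w \<ge> 1" unfolding c_def using xy fin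
      by (auto intro!: Suc_leI simp: card_gt_0_iff)
    have "c ?u + c ?w = card ({y\<in>A. y ! i = ?u} \<union> {z\<in>A. z ! i = ?w})"
      unfolding c_def using fin xy by (subst card_Un_disjoint) auto
    also have "\<dots> \<le> m" unfolding m_def using fin by (intro card_mono) auto
    finally have cc: "c ?u + c ?w \<le> m" .
    have key: "real (c v) * (real m - real (c v)) \<ge> real m - 1" if "1 \<le> c v" "c v \<le> m - 1" "m \<ge> 1" for v
    proof -
      have "0 \<le> (real (c v) - 1) * (real m - 1 - real (c v))" using that
        by (intro mult_nonneg_nonneg) (auto simp: of_nat_diff)
      thus ?thesis by (simp add: algebra_simps)
    qed
    have m1: "m \<ge> 1" using cc c1 by simp
    have "2 * (real m - 1) \<le> real (c ?u) * (real m - real (c ?u)) + real (c ?w) * (real m - real (c ?w))"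
    proof -
      have "c ?u \<le> m - 1" "c ?w \<le> m - 1" using c1 cc by auto
      hence "real m - 1 \<le> real (c ?u) * (real m - real (c ?u))" "real m - 1 \<le> real (c ?w) * (real m - real (c ?w))"
        using key[of ?u] key[of ?w] c1 m1 by auto
      thus ?thesis unfolding mult_2 by (rule add_mono)
    qed
    also have "\<dots> = (\<Sum>v\<in>{?u, ?w}. real (c v) * (real m - real (c v)))" using xy by simp
    also have "\<dots> \<le> (\<Sum>v\<in>V. real (c v) * (real m - real (c v)))"
      using uV finV cle by (intro sum_mono2) auto
    finally have "2 * (real m - 1) \<le> real S" using Sgrp by simp
    thus ?thesis using m1 by (simp add: m_def of_nat_diff)
  qed
  show "S = 0" if "\<not>(\<exists>x\<in>A. \<exists>y\<in>A. x ! i \<noteq> y ! i)"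
  proof -
    have e: "(if x ! i \<noteq> y ! i then 1 else 0 :: nat) = 0" if "x \<in> A" "y \<in> A" for x y
    proof -
      have "x ! i = y ! i" using that \<open>\<not>(\<exists>x\<in>A. \<exists>y\<in>A. x ! i \<noteq> y ! i)\<close> by blast
      thus ?thesis by simp
    qed
    show ?thesis unfolding S_def by (intro sum.neutral ballI e)
  qed
qed



theorem mainTheorem1:
  fixes n q :: nat and A :: "nat list set"
  assumes "n \<ge> 2" and "q \<ge> 2"
    and "A \<subseteq> words q n" and "card A \<ge> 2"
  shows "(real (card A) / real q \<ge> 1 \<longrightarrow>
           2 * real q * real (DA A) / ((real q - 1) * real (card A) ^ 2) \<le> real (rankA n A) \<and>
           real (rankA n A) \<le> real (DA A) / (real (card A) - 1))
       \<and> (real (card A) / real q < 1 \<and> q > 2 \<longrightarrow>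
           2 * (real q - 2) * real (DA A) /
             ((real (card A) ^ 2 - 2) * (real q - 2) - (real (card A) - 2) ^ 2) \<le> real (rankA n A) \<and>
           real (rankA n A) \<le> real (DA A) / (real (card A) - 1))"
proof -
  have fin: "finite A" using assms(4) by (metis card.infinite not_numeral_le_zero)
  have len: "length x = n" if "x \<in> A" for x using assms(3) that by (auto simp: words_def)
  have vals: "x ! i < q" if "x \<in> A" "i < n" for x i
  proof -
    have "set x \<subseteq> {..<q}" using assms(3) that(1) by (auto simp: words_def)
    moreover have "x ! i \<in> set x" using nth_mem len[OF that(1)] that(2) by auto
    ultimately show ?thesis by auto
  qed
  define S where "S i = (\<Sum>x\<in>A. \<Sum>y\<in>A. (if x ! i \<noteq> y ! i then 1 else 0 :: nat))" for i
  define N where "N = {i. i < n \<and> (\<exists>x\<in>A. \<exists>y\<in>A. x ! i \<noteq> y ! i)}"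
  have CB: "S i \<le> card A * (card A - 1) \<and> real (S i) \<le> real (card A)^2 * (real q - 1) / real q \<and>
     ((\<exists>x\<in>A. \<exists>y\<in>A. x ! i \<noteq> y ! i) \<longrightarrow> 2 * (card A - 1) \<le> S i) \<and>
     (\<not>(\<exists>x\<in>A. \<exists>y\<in>A. x ! i \<noteq> y ! i) \<longrightarrow> S i = 0)" if "i < n" for i
  proof -
    have vi: "\<And>x. x \<in> A \<Longrightarrow> x ! i < q" using vals that by blast
    show ?thesis unfolding S_def using coord_bounds[OF fin vi] by blast
  qed
  have R: "rankA n A = card N" unfolding rankA_def N_def ..
  have finN: "finite N" unfolding N_def by simp
  have "2 * DA A = (\<Sum>x\<in>A. \<Sum>y\<in>A. hamming x y)" by (rule DA_double[OF fin len])
  also have "\<dots> = (\<Sum>x\<in>A. \<Sum>y\<in>A. \<Sum>i<n. (if x ! i \<noteq> y ! i then 1 else 0 :: nat))"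
    by (intro sum.cong refl hamming_sum len)
  also have "\<dots> = (\<Sum>x\<in>A. \<Sum>i<n. \<Sum>y\<in>A. (if x ! i \<noteq> y ! i then 1 else 0 :: nat))"
    by (intro sum.cong refl sum.swap)
  also have "\<dots> = (\<Sum>i<n. S i)" unfolding S_def
    by (rule sum.swap)
  also have "\<dots> = (\<Sum>i\<in>N. S i)"
  proof (rule sum.mono_neutral_right)
    show "\<forall>i\<in>{..<n} - N. S i = 0"
      using CB unfolding N_def by blast
  qed (auto simp: N_def)
  finally have D2: "2 * DA A = (\<Sum>i\<in>N. S i)" .
  define m where "m = real (card A)"
  define D where "D = real (DA A)"
  define r where "r = real (rankA n A)"
  have D2r: "2 * D = (\<Sum>i\<in>N. real (S i))"
  proof -
    have "real (2 * DA A) = real (sum S N)" using D2 by simp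
    thus ?thesis by (simp add: D_def)
  qed
  have m2: "m \<ge> 2" using assms(4) by (simp add: m_def)
  have q2: "real q \<ge> 2" using assms(2) by simp
  have lo: "2 * (m - 1) * r \<le> 2 * D"
  proof -
    have "real (\<Sum>i\<in>N. 2 * (card A - 1)) \<le> real (\<Sum>i\<in>N. S i)"
      using CB unfolding N_def
      by (intro of_nat_mono sum_mono) blast
    thus ?thesis using D2r assms(4) by (simp add: R r_def m_def of_nat_diff mult.commute)
  qed
  have up1: "2 * D \<le> r * (m^2 * (real q - 1) / real q)"
  proof -
    have "real (\<Sum>i\<in>N. S i) = (\<Sum>i\<in>N. real (S i))" by simp
    also have "\<dots> \<le> (\<Sum>i\<in>N. m^2 * (real q - 1) / real q)"
      using CB unfolding N_def m_def
      by (intro sum_mono) blast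
    finally show ?thesis using D2r by (simp add: R r_def)
  qed
  have up2: "2 * D \<le> r * (m * (m - 1))"
  proof -
    have "(\<Sum>i\<in>N. S i) \<le> (\<Sum>i\<in>N. card A * (card A - 1))"
      using CB unfolding N_def
      by (intro sum_mono) blast
    hence "2 * DA A \<le> card N * (card A * (card A - 1))" using D2 by simp
    hence "real (2 * DA A) \<le> real (card N * (card A * (card A - 1)))" by (simp only: of_nat_le_iff)
    moreover have "real (card A - 1) = real (card A) - 1" using assms(4) by (simp add: of_nat_diff)
    ultimately show ?thesis by (simp add: R r_def D_def m_def)
  qed
  have r0: "r \<ge> 0" by (simp add: r_def)
  have upper: "r \<le> D / (m - 1)" using lo m2 by (simp add: field_simps)
  have c1: "2 * real q * D / ((real q - 1) * m ^ 2) \<le> r"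
  proof -
    have "2 * real q * D \<le> r * m^2 * (real q - 1)"
      using up1 q2 by (simp add: field_simps)
    thus ?thesis using q2 m2 by (simp add: divide_le_eq algebra_simps)
  qed
  have c2: "2 * (real q - 2) * D / ((m ^ 2 - 2) * (real q - 2) - (m - 2) ^ 2) \<le> r"
    if "m / real q < 1" "q > 2"
  proof -
    have mq: "m \<le> real q - 1" using that q2 by (simp add: m_def divide_less_eq)
    have qq: "real q - 2 > 0" using that by simp
    define Den where "Den = (m ^ 2 - 2) * (real q - 2) - (m - 2) ^ 2"
    have e1: "Den - (real q - 2) * (m * (m - 1)) = (m - 2) * ((real q - 2) - (m - 2))"
      unfolding Den_def by (simp add: algebra_simps power2_eq_square)
    have e2: "(m - 2) * ((real q - 2) - (m - 2)) \<ge> 0" using mq m2 by (intro mult_nonneg_nonneg) auto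
    have DD: "(real q - 2) * (m * (m - 1)) \<le> Den" using e1 e2 by linarith
    have "(real q - 2) * (m * (m - 1)) > 0" using qq m2 by (intro mult_pos_pos) auto
    hence Dp: "Den > 0" using DD by linarith
    have h: "(real q - 2) * (2 * D) \<le> (real q - 2) * (r * (m * (m - 1)))"
      using up2 qq by (intro mult_left_mono) auto
    have eq: "2 * (real q - 2) * D = (real q - 2) * (2 * D)" by simp
    have "2 * (real q - 2) * D \<le> (real q - 2) * (r * (m * (m - 1)))" unfolding eq by (rule h)
    also have "\<dots> = r * ((real q - 2) * (m * (m - 1)))" by simp
    also have "\<dots> \<le> r * Den" using DD r0 by (intro mult_left_mono)
    finally have "2 * (real q - 2) * D \<le> r * Den" .
    hence "2 * (real q - 2) * D / Den \<le> r" using Dp by (simp add: divide_le_eq mult.commute)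
    thus ?thesis unfolding Den_def .
  qed
  show ?thesis
    unfolding m_def[symmetric] D_def[symmetric] r_def[symmetric]
  proof (intro conjI impI)
    assume h: "m / real q < 1 \<and> 2 < q"
    show "2 * (real q - 2) * D / ((m ^ 2 - 2) * (real q - 2) - (m - 2) ^ 2) \<le> r"
      using h c2 by blast
  qed (rule c1 upper)+
qed

end
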